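(* Every instance of 2-SBCM has a solution with at most one block crossing before each meeting (i.e., $|B_i|\le 1$ for all $i$); in particular, it has a solution with at most $n$ block crossings in total, where $n$ is the number of meetings.
   Context: A storyline instance is a pair $(C,M)$ where $C=\{1,\dots,k\}$ is a set of characters and $M=[m_1,\dots,m_n]$ is a sequence of meetings with $m_i\subseteq C$; in 2-SBCM every meeting has exactly two characters. A permutation of $C$ lists each character exactly once. For $1\le a\le b<c\le k$, the block crossing $(a,b,c)$ maps $\langle \pi_1,\dots,\pi_k\rangle$ to $\langle \pi_1,\dots,\pi_{a-1},\pi_{b+1},\dots,\pi_c,\pi_a,\dots,\pi_b,\pi_{c+1},\dots,\pi_k\rangle$. A meeting fits (is supported by) a permutation if its characters occupy consecutive positions. A solution is a start permutation $\pi^0$ and sequences $B_1,\dots,B_n$ of block crossings (possibly empty) such that, with $\pi^i$ obtained by applying $B_i$ in order to $\pi^{i-1}$, $\pi^i$ supports $m_i$ for all $i$. *)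

theory Defs
  imports Main
begin

(* Characters are 1..k; a permutation of C = {1..k} is a list listing each character once.
   Positions are 1-based as in the paper. *)
definition is_perm :: "nat \<Rightarrow> nat list \<Rightarrow> bool" where
  "is_perm k \<pi> \<longleftrightarrow> distinct \<pi> \<and> set \<pi> = {1..k}"

(* block crossing (a,b,c): positions a..b and b+1..c are exchanged *)
definition valid_bc :: "nat \<Rightarrow> nat \<times> nat \<times> nat \<Rightarrow> bool" where
  "valid_bc k t \<longleftrightarrow> (case t of (a, b, c) \<Rightarrow> 1 \<le> a \<and> a \<le> b \<and> b < c \<and> c \<le> k)"

definition apply_bc :: "nat \<times> nat \<times> nat \<Rightarrow> nat list \<Rightarrow> nat list" where
  "apply_bc t \<pi> = (case t of (a, b, c) \<Rightarrow>
     take (a - 1) \<pi> @ drop b (take c \<pi>) @ drop (a - 1) (take b \<pi>) @ drop c \<pi>)"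

definition apply_bcs :: "(nat \<times> nat \<times> nat) list \<Rightarrow> nat list \<Rightarrow> nat list" where
  "apply_bcs B \<pi> = fold apply_bc B \<pi>"

definition supports :: "nat list \<Rightarrow> nat set \<Rightarrow> bool" where
  "supports \<pi> m \<longleftrightarrow> (\<exists>i j. i < length \<pi> \<and> j < length \<pi> \<and> i \<le> j \<and>
       m = set (drop i (take (Suc j) \<pi>)))"

definition sbcm2_instance :: "nat \<Rightarrow> nat set list \<Rightarrow> bool" where
  "sbcm2_instance k M \<longleftrightarrow> (\<forall>m \<in> set M. m \<subseteq> {1..k} \<and> card m = 2)"

definition perm_after :: "nat list \<Rightarrow> (nat \<times> nat \<times> nat) list list \<Rightarrow> nat \<Rightarrow> nat list" where
  "perm_after \<pi>0 Bs i = fold apply_bcs (take i Bs) \<pi>0"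

definition is_solution ::
  "nat \<Rightarrow> nat set list \<Rightarrow> nat list \<Rightarrow> (nat \<times> nat \<times> nat) list list \<Rightarrow> bool" where
  "is_solution k M \<pi>0 Bs \<longleftrightarrow>
     is_perm k \<pi>0 \<and> length Bs = length M \<and>
     (\<forall>B \<in> set Bs. \<forall>t \<in> set B. valid_bc k t) \<and>
     (\<forall>i < length M. supports (perm_after \<pi>0 Bs (Suc i)) (M ! i))"

end

theory Submission
  imports Defs
begin

lemma supp_adj: "supports (u @ x # y # w) {x, y}"
  unfolding supports_def
  apply (rule exI[of _ "length u"], rule exI[of _ "Suc (length u)"])
  by auto

lemma core:
  assumes "is_perm k (u @ x # v @ y # w)"
  shows "\<exists>B. length B \<le> 1 \<and> (\<forall>t\<in>set B. valid_bc k t)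
     \<and> is_perm k (apply_bcs B (u @ x # v @ y # w))
     \<and> supports (apply_bcs B (u @ x # v @ y # w)) {x, y}"
proof (cases "v = []")
  case True
  then show ?thesis using assms supp_adj[of u x y w]
    by (intro exI[of _ "[]"]) (auto simp: apply_bcs_def)
next
  case False
  let ?p = "u @ x # v @ y # w"
  have len: "length ?p = k"
    using assms unfolding is_perm_def by (metis card_atLeastAtMost diff_Suc_1 distinct_card)
  let ?t = "(length u + 2, length u + 1 + length v, length u + 2 + length v)"
  have vb: "valid_bc k ?t" using False len unfolding valid_bc_def by (cases v) auto
  have ap: "apply_bc ?t ?p = u @ x # y # v @ w"
    unfolding apply_bc_def by simp
  have "is_perm k (u @ x # y # v @ w)" using assms unfolding is_perm_def by auto
  then show ?thesis using vb ap supp_adj[of u x y "v @ w"]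
    by (intro exI[of _ "[?t]"]) (auto simp: apply_bcs_def)
qed

lemma step:
  assumes "is_perm k \<pi>" "m \<subseteq> {1..k}" "card m = 2"
  shows "\<exists>B. length B \<le> 1 \<and> (\<forall>t\<in>set B. valid_bc k t)
     \<and> is_perm k (apply_bcs B \<pi>) \<and> supports (apply_bcs B \<pi>) m"
proof -
  obtain x y where m: "m = {x, y}" "x \<noteq> y" using assms(3) by (meson card_2_iff)
  have xs: "x \<in> set \<pi>" "y \<in> set \<pi>" using assms(1,2) m unfolding is_perm_def by auto
  obtain u r where ur: "\<pi> = u @ x # r" using xs(1) split_list by metis
  have "y \<in> set u \<or> y \<in> set r" using xs(2) ur m(2) by auto
  then show ?thesis
  proof
    assume "y \<in> set u"
    then obtain u1 u2 where "u = u1 @ y # u2" using split_list by metis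
    then have "\<pi> = u1 @ y # u2 @ x # r" using ur by simp
    then show ?thesis using core[of k u1 y u2 x r] assms(1) m(1) by (simp add: insert_commute)
  next
    assume "y \<in> set r"
    then obtain v w where "r = v @ y # w" using split_list by metis
    then have "\<pi> = u @ x # v @ y # w" using ur by simp
    then show ?thesis using core[of k u x v y w] assms(1) m(1) by simp
  qed
qed

lemma gen:
  assumes "sbcm2_instance k M" "is_perm k \<pi>"
  shows "\<exists>Bs. length Bs = length M \<and> (\<forall>B \<in> set Bs. \<forall>t \<in> set B. valid_bc k t)
     \<and> (\<forall>B \<in> set Bs. length B \<le> 1)
     \<and> (\<forall>i < length M. supports (fold apply_bcs (take (Suc i) Bs) \<pi>) (M ! i))"
  using assms
proof (induction M arbitrary: \<pi>)
  case Nil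
  then show ?case by simp
next
  case (Cons m M)
  have mi: "m \<subseteq> {1..k}" "card m = 2" "sbcm2_instance k M"
    using Cons.prems(1) unfolding sbcm2_instance_def by auto
  obtain B where B: "length B \<le> 1" "\<forall>t\<in>set B. valid_bc k t"
     "is_perm k (apply_bcs B \<pi>)" "supports (apply_bcs B \<pi>) m"
    using step[OF Cons.prems(2) mi(1,2)] by blast
  obtain Bs where Bs: "length Bs = length M" "\<forall>B \<in> set Bs. \<forall>t \<in> set B. valid_bc k t"
     "\<forall>B \<in> set Bs. length B \<le> 1"
     "\<forall>i < length M. supports (fold apply_bcs (take (Suc i) Bs) (apply_bcs B \<pi>)) (M ! i)"
    using Cons.IH[OF mi(3) B(3)] by blast
  have "\<forall>i < length (m # M). supports (fold apply_bcs (take (Suc i) (B # Bs)) \<pi>) ((m # M) ! i)"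
  proof (intro allI impI)
    fix i assume "i < length (m # M)"
    then show "supports (fold apply_bcs (take (Suc i) (B # Bs)) \<pi>) ((m # M) ! i)"
      using B(4) Bs(4) by (cases i) auto
  qed
  then show ?case using B Bs by (intro exI[of _ "B # Bs"]) auto
qed

lemma sum_le: "\<forall>B \<in> set Bs. length B \<le> (1::nat) \<Longrightarrow> (\<Sum>B\<leftarrow>Bs. length B) \<le> length Bs"
  by (induction Bs) auto

theorem mainTheorem13:
  fixes k :: nat and M :: "nat set list"
  assumes "sbcm2_instance k M"
  shows "\<exists>\<pi>0 Bs. is_solution k M \<pi>0 Bs \<and> (\<forall>i < length M. length (Bs ! i) \<le> 1)
           \<and> (\<Sum>B\<leftarrow>Bs. length B) \<le> length M"
proof -
  have p: "is_perm k [1..<Suc k]" unfolding is_perm_def by auto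
  obtain Bs where Bs: "length Bs = length M" "\<forall>B \<in> set Bs. \<forall>t \<in> set B. valid_bc k t"
     "\<forall>B \<in> set Bs. length B \<le> 1"
     "\<forall>i < length M. supports (fold apply_bcs (take (Suc i) Bs) [1..<Suc k]) (M ! i)"
    using gen[OF assms p] by blast
  have "is_solution k M [1..<Suc k] Bs"
    unfolding is_solution_def perm_after_def using p Bs by auto
  moreover have "\<forall>i < length M. length (Bs ! i) \<le> 1" using Bs(1,3) by auto
  moreover have "(\<Sum>B\<leftarrow>Bs. length B) \<le> length M" using sum_le[OF Bs(3)] Bs(1) by simp
  ultimately show ?thesis by blast
qed

end
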